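(* Assume $p>2$. Let $\phi$ be a quasilinear $p$-form over $F$ with $1\in D(\phi)$ and let $L$ be a field extension of $F$. Suppose there exist a polynomial $P\in F^p[T]$ in one variable with $2\le\deg P<p$ and an element $\alpha\in D(\phi_L)\setminus\{0\}$ such that $\alpha P(b)\in D(\phi_L)$ for all $b\in D(\phi)$. Then $(\phi_L)_{an}$ is a quasi-Pfister $p$-form.
   Context: Let $p$ be a prime and $F$ a field of characteristic $p$; $F^p=\{x^p:x\in F\}$. A quasilinear $p$-form over a field $K$ of characteristic $p$ is a map $\phi\colon V\to K$ on a nonzero finite-dimensional $K$-vector space, homogeneous of degree $p$ and additive; equivalently $\phi\simeq\langle a_1,\dots,a_n\rangle\colon(\lambda_i)\mapsto\sum a_i\lambda_i^p$. $D(\phi)=\{\phi(v)\}$; $\phi_L$ is the scalar extension. $\phi_{an}$ is the unique (up to isomorphism) anisotropic form (no nonzero isotropic vectors) with $D(\phi_{an})=D(\phi)$. An $n$-fold quasi-Pfister $p$-form is $\bigotimes_{i=1}^n\langle1,a_i,\dots,a_i^{p-1}\rangle$ ($n\ge0$, 0-fold: $\langle1\rangle$). *)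

theory Defs
  imports "HOL-Computational_Algebra.Polynomial"
begin

text \<open>The ambient field L is a type 'a :: field; the base field F is a subfield
  of L, given as a subset. A quasilinear p-form is represented in diagonal form
  by its (nonempty) list of coefficients a = [a_1,...,a_n]; a vector is a function
  v :: nat => 'a of which only the entries v 0, ..., v (n-1) matter.\<close>

definition is_subfield :: "'a::field set \<Rightarrow> bool" where
  "is_subfield F \<longleftrightarrow> 0 \<in> F \<and> 1 \<in> F \<and>
     (\<forall>x\<in>F. \<forall>y\<in>F. x + y \<in> F \<and> x * y \<in> F) \<and>
     (\<forall>x\<in>F. - x \<in> F) \<and> (\<forall>x\<in>F. x \<noteq> 0 \<longrightarrow> inverse x \<in> F)"

definition qf_val :: "nat \<Rightarrow> 'a::field list \<Rightarrow> (nat \<Rightarrow> 'a) \<Rightarrow> 'a" where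
  "qf_val p a v = (\<Sum>i<length a. a ! i * v i ^ p)"

text \<open>D(phi) over a field K (K a subfield of the ambient field): the set of values
  on vectors with entries in K. For the form over F use K = F, for the scalar
  extension phi_L use K = UNIV.\<close>
definition qf_D :: "'a::field set \<Rightarrow> nat \<Rightarrow> 'a list \<Rightarrow> 'a set" where
  "qf_D K p a = {qf_val p a v | v. \<forall>i<length a. v i \<in> K}"

definition is_qform :: "'a::field set \<Rightarrow> 'a list \<Rightarrow> bool" where
  "is_qform K a \<longleftrightarrow> a \<noteq> [] \<and> set a \<subseteq> K"

definition qf_anisotropic :: "'a::field set \<Rightarrow> nat \<Rightarrow> 'a list \<Rightarrow> bool" where
  "qf_anisotropic K p a \<longleftrightarrow>
     (\<forall>v. (\<forall>i<length a. v i \<in> K) \<longrightarrow> qf_val p a v = 0 \<longrightarrow> (\<forall>i<length a. v i = 0))"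

definition mat_app :: "nat \<Rightarrow> (nat \<Rightarrow> nat \<Rightarrow> 'a::field) \<Rightarrow> (nat \<Rightarrow> 'a) \<Rightarrow> nat \<Rightarrow> 'a" where
  "mat_app n M v = (\<lambda>i. \<Sum>j<n. M i j * v j)"

definition qf_iso :: "nat \<Rightarrow> 'a::field list \<Rightarrow> 'a list \<Rightarrow> bool" where
  "qf_iso p a b \<longleftrightarrow> length a = length b \<and>
     (\<exists>M N. (\<forall>v. \<forall>i<length a. mat_app (length a) N (mat_app (length a) M v) i = v i) \<and>
            (\<forall>v. \<forall>i<length a. mat_app (length a) M (mat_app (length a) N v) i = v i) \<and>
            (\<forall>v. qf_val p b (mat_app (length a) M v) = qf_val p a v))"

definition qf_tensor :: "'a::field list \<Rightarrow> 'a list \<Rightarrow> 'a list" where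
  "qf_tensor a b = concat (map (\<lambda>x. map (\<lambda>y. x * y) b) a)"

fun qpfister :: "nat \<Rightarrow> 'a::field list \<Rightarrow> 'a list" where
  "qpfister p [] = [1]"
| "qpfister p (c # cs) = qf_tensor (map (\<lambda>j. c ^ j) [0..<p]) (qpfister p cs)"

definition is_quasi_pfister :: "nat \<Rightarrow> 'a::field list \<Rightarrow> bool" where
  "is_quasi_pfister p a \<longleftrightarrow> (\<exists>cs. qf_iso p a (qpfister p cs))"

end

theory Submission
  imports Defs "HOL-Algebra.Embedded_Algebras" "HOL-Computational_Algebra.Computational_Algebra"
begin

definition RR :: "'a::field ring" where
  "RR = \<lparr> carrier = UNIV, monoid.mult = (\<lambda>x y. x * y), one = 1, ring.zero = 0, add = (\<lambda>x y. x + y) \<rparr>"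

lemma RR_simps [simp]: "carrier RR = UNIV" "x \<otimes>\<^bsub>RR\<^esub> y = x * y" "\<one>\<^bsub>RR\<^esub> = 1"
  "\<zero>\<^bsub>RR\<^esub> = 0" "x \<oplus>\<^bsub>RR\<^esub> y = x + y"
  by (auto simp: RR_def)

lemma field_RR: "field (RR :: 'a::field ring)"
proof -
  have "\<exists>y. x + y = 0" for x :: 'a
    using add.right_inverse by blast
  moreover have "x \<noteq> 0 \<Longrightarrow> \<exists>y. x * y = 1" for x :: 'a
    by (rule exI[of _ "inverse x"]) auto
  ultimately show ?thesis
    unfolding RR_def using add.right_inverse
    by unfold_locales (auto simp:algebra_simps Units_def)
qed

lemma ring_RR: "ring (RR :: 'a::field ring)"
  by (rule cring.axioms(1)[OF domain.axioms(1)[OF field.axioms(1)[OF field_RR]]])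

lemma RR_minus [simp]: "\<ominus>\<^bsub>RR\<^esub> x = - (x::'a::field)"
proof -
  interpret ring "RR :: 'a ring" by (rule ring_RR)
  have "x \<oplus>\<^bsub>RR\<^esub> (- x) = \<zero>\<^bsub>RR\<^esub>" by simp
  thus ?thesis using minus_equality by (metis RR_simps(1) UNIV_I a_comm)
qed

lemma RR_inv [simp]: "x \<noteq> 0 \<Longrightarrow> inv\<^bsub>RR\<^esub> x = inverse (x::'a::field)"
proof -
  interpret field "RR :: 'a ring" by (rule field_RR)
  assume "x \<noteq> 0"
  thus ?thesis using inv_char[of x "inverse x"] by simp
qed

definition Kp :: "nat \<Rightarrow> 'a::field set" where "Kp p = range (\<lambda>x. x ^ p)"

lemma Kp_subfield:
  assumes "prime p" "CHAR('a::field) = p"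
  shows "subfield (Kp p :: 'a set) RR"
proof -
  interpret field "RR :: 'a ring" by (rule field_RR)
  have pc: "prime CHAR('a)" using assms by simp
  show ?thesis
  proof (rule subfieldI'[OF subringI])
    show "\<one>\<^bsub>RR\<^esub> \<in> (Kp p :: 'a set)" by (auto simp: Kp_def intro: range_eqI[of _ _ 1])
    fix h h1 h2 :: 'a
    assume "h \<in> Kp p" then obtain x where "h = x ^ p" by (auto simp: Kp_def)
    thus "\<ominus>\<^bsub>RR\<^esub> h \<in> Kp p" using minus_power_prime_CHAR[of p "x"] assms
      by (auto simp: Kp_def intro: range_eqI[of _ _ "-x"])
  next
    fix h1 h2 :: 'a assume "h1 \<in> Kp p" "h2 \<in> Kp p"
    then obtain x y where "h1 = x ^ p" "h2 = y ^ p" by (auto simp: Kp_def)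
    thus "h1 \<otimes>\<^bsub>RR\<^esub> h2 \<in> Kp p" "h1 \<oplus>\<^bsub>RR\<^esub> h2 \<in> Kp p"
      using freshmans_dream[OF pc assms(2)[symmetric], of x y]
      by (auto simp: Kp_def power_mult_distrib intro: range_eqI[of _ _ "x*y"] range_eqI[of _ _ "x+y"])
  next
    fix k :: 'a assume "k \<in> Kp p - {\<zero>\<^bsub>RR\<^esub>}"
    then obtain x where "k = x ^ p" "k \<noteq> 0" by (auto simp: Kp_def)
    thus "inv\<^bsub>RR\<^esub> k \<in> Kp p"
      by (auto simp: Kp_def power_inverse intro: range_eqI[of _ _ "inverse x"])
  qed auto
qed

interpretation RRi: ring "RR :: 'a::field ring" by (rule ring_RR)

lemma comb_sum: "RRi.combine Ks Us = (\<Sum>i<min (length Ks) (length Us). Ks!i * (Us!i :: 'a::field))"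
proof (induction Ks arbitrary: Us)
  case Nil thus ?case by simp
next
  case (Cons k Ks) thus ?case
    by (cases Us) (simp_all add: sum.lessThan_Suc_shift del: sum.lessThan_Suc)
qed

lemma qf_val_comb: "qf_val p a v = RRi.combine (map (\<lambda>i. v i ^ p) [0..<length a]) a"
  by (simp add: comb_sum qf_val_def mult.commute)

lemma qf_D_Span:
  assumes "prime p" "CHAR('a::field) = p"
  shows "qf_D UNIV p (a::'a list) = RRi.Span (Kp p) a"
proof -
  have K: "subfield (Kp p :: 'a set) RR" by (rule Kp_subfield[OF assms])
  have sp: "x \<in> RRi.Span (Kp p) a \<longleftrightarrow> (\<exists>Ks. set Ks \<subseteq> Kp p \<and> length Ks = length a \<and> x = RRi.combine Ks a)" for x
    by (rule RRi.Span_mem_iff_length_version[OF K]) simp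
  show ?thesis
  proof (rule Set.set_eqI, rule iffI)
    fix x assume "x \<in> qf_D UNIV p a"
    then obtain v where "x = qf_val p a v" by (auto simp: qf_D_def)
    thus "x \<in> RRi.Span (Kp p) a" unfolding sp qf_val_comb
      by (intro exI[of _ "map (\<lambda>i. v i ^ p) [0..<length a]"]) (auto simp: Kp_def)
  next
    fix x assume "x \<in> RRi.Span (Kp p) a"
    then obtain Ks where Ks: "set Ks \<subseteq> Kp p" "length Ks = length a" "x = RRi.combine Ks a"
      unfolding sp by blast
    have "\<forall>i<length Ks. \<exists>y. Ks!i = y ^ p"
    proof (intro allI impI)
      fix i assume "i < length Ks" hence "Ks!i \<in> Kp p" using Ks(1) nth_mem by blast
      thus "\<exists>y. Ks!i = y ^ p" by (auto simp: Kp_def)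
    qed
    then obtain v where v: "\<forall>i<length Ks. Ks!i = v i ^ p" by metis
    have "Ks = map (\<lambda>i. v i ^ p) [0..<length a]" using v Ks(2) by (auto intro: nth_equalityI)
    thus "x \<in> qf_D UNIV p a" using Ks(3) by (auto simp: qf_D_def qf_val_comb)
  qed
qed

lemma aniso_indep:
  assumes "prime p" "CHAR('a::field) = p"
  shows "qf_anisotropic UNIV p (a::'a list) \<longleftrightarrow> RRi.independent (Kp p) a"
proof
  have K: "subfield (Kp p :: 'a set) RR" by (rule Kp_subfield[OF assms])
  assume an: "qf_anisotropic UNIV p a"
  show "RRi.independent (Kp p) a"
  proof (rule RRi.trivial_combine_imp_independent[OF K])
    fix Ks assume Ks: "set Ks \<subseteq> Kp p" "RRi.combine Ks a = \<zero>\<^bsub>RR\<^esub>"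
    have "\<forall>i<length Ks. \<exists>y. Ks!i = y ^ p"
    proof (intro allI impI)
      fix i assume "i < length Ks" hence "Ks!i \<in> Kp p" using Ks(1) nth_mem by blast
      thus "\<exists>y. Ks!i = y ^ p" by (auto simp: Kp_def)
    qed
    then obtain w where w: "\<forall>i<length Ks. Ks!i = w i ^ p" by metis
    define v where "v i = (if i < length Ks then w i else 0)" for i
    have pp: "p > 0" using assms prime_gt_0_nat by blast
    have "qf_val p a v = RRi.combine Ks a"
      unfolding qf_val_def comb_sum
      by (rule sum.mono_neutral_cong_right) (use pp w in \<open>auto simp: v_def mult.commute\<close>)
    hence "\<forall>i<length a. v i = 0" using an Ks(2) by (auto simp: qf_anisotropic_def)
    thus "set (take (length a) Ks) \<subseteq> {\<zero>\<^bsub>RR\<^esub>}"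
      using w pp by (auto simp: set_conv_nth v_def)
  qed simp
next
  assume ind: "RRi.independent (Kp p) a"
  have K: "subfield (Kp p :: 'a set) RR" by (rule Kp_subfield[OF assms])
  show "qf_anisotropic UNIV p a" unfolding qf_anisotropic_def
  proof (rule allI, rule impI, rule impI)
    fix v assume "\<forall>i<length a. v i \<in> UNIV" "qf_val p a v = 0"
    from this(2) have "set (take (length a) (map (\<lambda>i. v i ^ p) [0..<length a])) \<subseteq> {\<zero>\<^bsub>RR\<^esub>}"
      by (intro RRi.independent_imp_trivial_combine[OF K ind]) (auto simp: Kp_def qf_val_comb)
    moreover have "p \<noteq> 0" using assms prime_gt_0_nat by blast
    ultimately show "\<forall>i<length a. v i = 0" by (auto simp: image_subset_iff)
  qed
qed

lemma frob_diff:
  assumes "prime p" "CHAR('a::comm_ring_1) = p"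
  shows "((x::'a) - y) ^ p = x ^ p - y ^ p"
proof -
  have "((x - y) + y) ^ p = (x - y) ^ p + y ^ p"
    by (rule freshmans_dream) (use assms in auto)
  thus ?thesis by (simp add: algebra_simps)
qed

lemma frob_sum:
  assumes "prime p" "CHAR('a::comm_ring_1) = p"
  shows "(sum (f::'b \<Rightarrow> 'a) A) ^ p = (\<Sum>i\<in>A. f i ^ p)"
  by (rule freshmans_dream_sum) (use assms in auto)

lemma qf_val_diff:
  assumes "prime p" "CHAR('a::field) = p"
  shows "qf_val p a (\<lambda>i. x i - y i) = qf_val p (a::'a list) x - qf_val p a y"
  by (simp add: qf_val_def frob_diff[OF assms] algebra_simps sum_subtractf)

lemma val_mat:
  assumes "prime p" "CHAR('a::field) = p" "length a = n" "length b = n"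
    and "\<forall>k<n. a!k = qf_val p b (\<lambda>j. M j k)"
  shows "qf_val p b (mat_app n M v) = qf_val p (a::'a list) v"
proof -
  have "qf_val p b (mat_app n M v) = (\<Sum>j<n. b!j * (\<Sum>k<n. M j k ^ p * v k ^ p))"
    unfolding qf_val_def mat_app_def using assms
    by (simp add: frob_sum[OF assms(1,2)] power_mult_distrib)
  also have "\<dots> = (\<Sum>k<n. v k ^ p * (\<Sum>j<n. b!j * M j k ^ p))"
    unfolding sum_distrib_left by (rule trans[OF sum.swap]) (simp add: mult_ac)
  also have "\<dots> = (\<Sum>k<n. a!k * v k ^ p)"
    using assms(4,5) by (intro sum.cong) (auto simp: qf_val_def mult.commute)
  finally show ?thesis using assms(3) by (simp add: qf_val_def)
qed

lemma inv_mat: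
  assumes "prime p" "CHAR('a::field) = p" "length a = n" "length b = n"
    and an: "qf_anisotropic UNIV p a"
    and M: "\<forall>k<n. a!k = qf_val p b (\<lambda>j. M j k)"
    and N: "\<forall>j<n. b!j = qf_val p a (\<lambda>i. N i j)"
    and that: "i < n"
  shows "mat_app n N (mat_app n M v) i = (v i :: 'a)"
proof -
  have delta: "(\<Sum>j<n. N i j * M j k) = (if i = k then 1 else 0)" if "i < n" "k < n" for i k
  proof -
    have "a!k = (\<Sum>j<n. b!j * M j k ^ p)" using M that assms(4) by (simp add: qf_val_def)
    also have "\<dots> = (\<Sum>j<n. (\<Sum>i<n. a!i * N i j ^ p) * M j k ^ p)"
      using N assms(3) by (intro sum.cong) (auto simp: qf_val_def)
    also have "\<dots> = (\<Sum>i<n. a!i * (\<Sum>j<n. N i j * M j k) ^ p)"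
      by (simp add: frob_sum[OF assms(1,2)] power_mult_distrib sum_distrib_left sum_distrib_right
          algebra_simps) (subst sum.swap, simp)
    finally have e1: "a!k = qf_val p a (\<lambda>i. \<Sum>j<n. N i j * M j k)"
      using assms(3) by (simp add: qf_val_def)
    have pp: "p > 0" using assms(1) prime_gt_0_nat by blast
    have "qf_val p a (\<lambda>i. if i = k then 1 else 0) = (\<Sum>i<n. if i = k then a!i else 0)"
      unfolding qf_val_def using pp assms(3) by (intro sum.cong) auto
    hence e2: "a!k = qf_val p a (\<lambda>i. if i = k then 1 else 0)" using that by simp
    have "qf_val p a (\<lambda>i. (\<Sum>j<n. N i j * M j k) - (if i = k then 1 else 0)) = 0"
      by (simp add: qf_val_diff[OF assms(1,2)] flip: e1 e2)
    hence "\<forall>i<length a. (\<Sum>j<n. N i j * M j k) - (if i = k then 1 else 0) = 0"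
      using an unfolding qf_anisotropic_def by blast
    thus ?thesis using that assms(3) by auto
  qed
  have "mat_app n N (mat_app n M v) i = (\<Sum>k<n. (\<Sum>j<n. N i j * M j k) * v k)"
    unfolding mat_app_def
    by (simp add: sum_distrib_left sum_distrib_right algebra_simps) (subst sum.swap, simp)
  also have "\<dots> = (\<Sum>k<n. (if i = k then v k else 0))"
    using delta that by (intro sum.cong) auto
  also have "\<dots> = v i" using that by simp
  finally show ?thesis .
qed

lemma base_in_D:
  assumes "prime p" "CHAR('a::field) = p"
  shows "set a \<subseteq> qf_D UNIV p (a::'a list)"
proof -
  have K: "subfield (Kp p :: 'a set) RR" by (rule Kp_subfield[OF assms])
  show ?thesis unfolding qf_D_Span[OF assms] by (rule RRi.Span_base_incl[OF K]) simp
qed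

lemma aniso_length_le:
  assumes "prime p" "CHAR('a::field) = p" "qf_anisotropic UNIV p a" "qf_anisotropic UNIV p b"
    "qf_D UNIV p a \<subseteq> qf_D UNIV p (b::'a list)"
  shows "length a \<le> length b"
proof -
  have K: "subfield (Kp p :: 'a set) RR" by (rule Kp_subfield[OF assms(1,2)])
  show ?thesis
    using RRi.independent_length_le[OF K] assms base_in_D[OF assms(1,2), of a]
    unfolding aniso_indep[OF assms(1,2)] qf_D_Span[OF assms(1,2)] by blast
qed

lemma iso_same:
  assumes pr: "prime p" "CHAR('a::field) = p" and an: "qf_anisotropic UNIV p a" "qf_anisotropic UNIV p b"
    and eq: "qf_D UNIV p a = qf_D UNIV p (b::'a list)"
  shows "qf_iso p a b"
proof -
  define n where "n = length a"
  have lb: "length b = n" using aniso_length_le[OF pr an] aniso_length_le[OF pr an(2,1)] eq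
    unfolding n_def by (metis order_refl le_antisym)
  have ex: "\<forall>k<length c. \<exists>v. c!k = qf_val p d v" if "qf_D UNIV p c = qf_D UNIV p d" for c d :: "'a list"
  proof (intro allI impI)
    fix k assume "k < length c"
    hence "c!k \<in> qf_D UNIV p d" using base_in_D[OF pr, of c] that nth_mem by blast
    thus "\<exists>v. c!k = qf_val p d v" by (auto simp: qf_D_def)
  qed
  define M where "M j k = (SOME v. a!k = qf_val p b v) j" for j k
  define N where "N i j = (SOME v. b!j = qf_val p a v) i" for i j
  have M: "\<forall>k<n. a!k = qf_val p b (\<lambda>j. M j k)"
    unfolding M_def n_def
  proof (intro allI impI)
    fix k assume "k < length a"
    thus "a!k = qf_val p b (\<lambda>j. (SOME v. a!k = qf_val p b v) j)"
      using ex[OF eq] someI_ex[of "\<lambda>v. a!k = qf_val p b v"] by auto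
  qed
  have N: "\<forall>j<n. b!j = qf_val p a (\<lambda>i. N i j)"
    unfolding N_def
  proof (intro allI impI)
    fix k assume "k < n"
    thus "b!k = qf_val p a (\<lambda>j. (SOME v. b!k = qf_val p a v) j)"
      using ex[OF eq[symmetric]] lb someI_ex[of "\<lambda>v. b!k = qf_val p a v"] by auto
  qed
  show ?thesis unfolding qf_iso_def
  proof (rule conjI)
    show "length a = length b" using lb n_def by simp
    show "\<exists>M N. (\<forall>v i. i < length a \<longrightarrow>
                  mat_app (length a) N (mat_app (length a) M v) i = v i) \<and>
           (\<forall>v i. i < length a \<longrightarrow>
                  mat_app (length a) M (mat_app (length a) N v) i = v i) \<and>
           (\<forall>v. qf_val p b (mat_app (length a) M v) = qf_val p a v)"
  proof (rule exI[of _ M], rule exI[of _ N], intro conjI allI impI)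
    fix v
    show "qf_val p b (mat_app (length a) M v) = qf_val p a v"
      using val_mat[OF pr n_def[symmetric] lb M] n_def by simp
    fix i assume "i < length a"
    thus "mat_app (length a) N (mat_app (length a) M v) i = v i"
      using inv_mat[OF pr n_def[symmetric] lb an(1) M N] n_def by simp
  next
    fix v i assume "i < length a"
    thus "mat_app (length a) M (mat_app (length a) N v) i = v i"
      using inv_mat[OF pr lb n_def[symmetric] an(2) N M] n_def by simp
  qed
  qed
qed

lemma exists_aniso:
  assumes pr: "prime p" "CHAR('a::field) = p" and ne: "qf_D UNIV p (a::'a list) \<noteq> {0}"
  shows "\<exists>psi. is_qform UNIV psi \<and> qf_anisotropic UNIV p psi \<and> qf_D UNIV p psi = qf_D UNIV p a"
proof -
  have K: "subfield (Kp p :: 'a set) RR" by (rule Kp_subfield[OF assms(1,2)])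
  obtain Vs where Vs: "RRi.independent (Kp p) Vs" "RRi.Span (Kp p) Vs = RRi.Span (Kp p) a"
    using RRi.filter_base[OF K, of a] by auto
  have "Vs \<noteq> []" using Vs(2) ne unfolding qf_D_Span[OF pr] by auto
  thus ?thesis using Vs unfolding qf_D_Span[OF pr] aniso_indep[OF pr]
    by (intro exI[of _ Vs]) (auto simp: is_qform_def)
qed

definition Wp :: "'a::field set \<Rightarrow> 'a poly \<Rightarrow> bool" where "Wp W g \<longleftrightarrow> (\<forall>i. Polynomial.coeff g i \<in> W)"

lemma monic_dvd_linpow:
  fixes g :: "'a::field poly"
  assumes "lead_coeff g = 1" "g dvd [:-c,1:]^k"
  shows "g = [:-c,1:]^(degree g)"
proof -
  obtain q where q: "[:-c,1:]^k = g * q" using assms(2) by (auto elim: dvdE)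
  have nz: "g * q \<noteq> 0" using q[symmetric] by simp
  hence gq: "g \<noteq> 0" "q \<noteq> 0" by auto
  have "Polynomial.order c (g * q) = k" using q by (metis order_power_n_n)
  hence o: "Polynomial.order c g + Polynomial.order c q = k" using order_mult[OF nz] by simp
  have "degree (g * q) = k" using q by (metis degree_linear_power)
  hence "degree g + degree q = k" using degree_mult_eq[OF gq] by simp
  hence og: "Polynomial.order c g = degree g" using o order_degree[OF gq(1), of c] order_degree[OF gq(2), of c]
    by linarith
  obtain s where s: "g = [:-c,1:]^(degree g) * s" using order_1[of c g] og by (auto elim: dvdE)
  have "s \<noteq> 0" using s gq by auto
  hence "degree s = 0" using s degree_mult_eq[of "[:-c,1:]^(degree g)" s] by (simp add: degree_linear_power)
  moreover have "lead_coeff s = 1" using s assms(1) by (metis lead_coeff_mult lead_coeff_power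
      lead_coeff_pCons(1) mult_1 one_neq_zero pCons_one power_one)
  moreover from \<open>degree s = 0\<close> obtain a where "s = [:a:]" by (rule degree_eq_zeroE)
  ultimately have "s = 1" by (simp add: one_pCons)
  thus ?thesis using s by simp
qed

lemma linpow_coeff: "Polynomial.coeff ([:a::'a::comm_ring_1, 1:] ^ Suc n) n = of_nat (Suc n) * a"
proof (induction n)
  case 0 thus ?case by simp
next
  case (Suc n)
  have "[:a,1:] ^ Suc (Suc n) = Polynomial.smult a ([:a,1:] ^ Suc n) + pCons 0 ([:a,1:] ^ Suc n)"
    by (simp add: algebra_simps)
  thus ?case using Suc coeff_linear_power[of a "Suc n"] by (simp add: algebra_simps)
qed

locale subf =
  fixes W :: "'a::field set"
  assumes z: "0 \<in> W" and o: "1 \<in> W" and ad: "\<And>x y. x \<in> W \<Longrightarrow> y \<in> W \<Longrightarrow> x + y \<in> W"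
    and mu: "\<And>x y. x \<in> W \<Longrightarrow> y \<in> W \<Longrightarrow> x * y \<in> W"
    and ng: "\<And>x. x \<in> W \<Longrightarrow> - x \<in> W"
    and iv: "\<And>x. x \<in> W \<Longrightarrow> inverse x \<in> W"
begin

lemma sb: "x \<in> W \<Longrightarrow> y \<in> W \<Longrightarrow> x - y \<in> W"
  using ad ng by (metis diff_conv_add_uminus)

lemma ofnat: "of_nat n \<in> W"
  by (induction n) (auto intro: ad z o)

lemma reduce:
  assumes g: "Wp W g" "lead_coeff g = 1" "degree g = m" "m \<ge> 1"
  shows "Wp W f \<Longrightarrow> \<exists>q r. f = q * g + r \<and> Wp W r \<and> degree r < m"
proof (induction "degree f" arbitrary: f rule: less_induct)
  case less
  show ?case
  proof (cases "degree f < m")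
    case True thus ?thesis using less.prems by (intro exI[of _ 0] exI[of _ f]) auto
  next
    case False
    define d where "d = degree f"
    define f' where "f' = f - Polynomial.monom (lead_coeff f) (d - m) * g"
    have dm: "d \<ge> m" using False d_def by simp
    have Wf': "Wp W f'" unfolding Wp_def f'_def
      using less.prems g(1) by (auto simp: Wp_def coeff_monom_mult intro!: sb mu z)
    have c1: "Polynomial.coeff f' i = 0" if "i \<ge> d" for i
    proof (cases "i = d")
      case True thus ?thesis using dm g(2,3) by (simp add: f'_def coeff_monom_mult d_def)
    next
      case False
      hence "i > d" using that by simp
      hence "Polynomial.coeff f i = 0" "Polynomial.coeff g (i - (d - m)) = 0" using dm g(3) d_def
        by (auto intro: coeff_eq_0)
      thus ?thesis by (simp add: f'_def coeff_monom_mult)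
    qed
    have "degree f' < d"
    proof (rule ccontr)
      assume "\<not> degree f' < d"
      hence "Polynomial.coeff f' (degree f') = 0" using c1 by simp
      hence "f' = 0" by simp
      thus False using \<open>\<not> degree f' < d\<close> dm g(4) by simp
    qed
    then obtain q r where qr: "f' = q * g + r" "Wp W r" "degree r < m"
      using less.hyps[of f'] Wf' d_def by blast
    have "f = (q + Polynomial.monom (lead_coeff f) (d - m)) * g + r"
      using qr(1) unfolding f'_def by (simp add: algebra_simps)
    thus ?thesis using qr by blast
  qed
qed

lemma powers_indep:
  assumes pr: "prime p" "CHAR('a) = p" and cW: "c \<notin> W" "c^p \<in> W"
    and w: "\<forall>j<p. w j \<in> W" "(\<Sum>j<p. w j * c^j) = 0"
  shows "\<forall>j<p. w j = 0"
proof (rule ccontr)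
  assume "\<not> (\<forall>j<p. w j = 0)"
  then obtain j0 where j0: "j0 < p" "w j0 \<noteq> 0" by blast
  have pp: "p > 0" using pr prime_gt_0_nat by blast
  define S where "S = {g. g \<noteq> 0 \<and> Wp W g \<and> poly g c = 0 \<and> degree g < p}"
  define g0 where "g0 = (\<Sum>j<p. Polynomial.monom (w j) j)"
  have cg0: "Polynomial.coeff g0 i = (if i < p then w i else 0)" for i
    unfolding g0_def by (simp add: coeff_sum)
  have "g0 \<in> S" unfolding S_def
  proof (intro CollectI conjI)
    show "g0 \<noteq> 0" using cg0[of j0] j0 by auto
    show "Wp W g0" unfolding Wp_def cg0 using w(1) z by auto
    show "poly g0 c = 0" unfolding g0_def poly_sum poly_monom using w(2) .
    have "degree g0 \<le> p - 1" by (rule degree_le) (auto simp: cg0)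
    thus "degree g0 < p" using pp by linarith
  qed
  then obtain g where g: "g \<in> S" "\<forall>h. h \<in> S \<longrightarrow> degree g \<le> degree h"
    using ex_has_least_nat[of "\<lambda>g. g \<in> S" g0 degree] by blast
  define g1 where "g1 = Polynomial.smult (inverse (lead_coeff g)) g"
  have gnz: "g \<noteq> 0" using g(1) by (simp add: S_def)
  have g1d: "degree g1 = degree g" by (simp add: g1_def gnz)
  have g1l: "lead_coeff g1 = 1" using gnz by (simp add: g1_def g1d)
  have g1W: "Wp W g1" using g(1) unfolding S_def Wp_def g1_def by (auto intro: mu iv)
  have g1c: "poly g1 c = 0" using g(1) by (simp add: S_def g1_def)
  define m where "m = degree g1"
  have mp: "m < p" using g(1) g1d by (simp add: S_def m_def)
  have m1: "m \<ge> 1"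
  proof (rule ccontr)
    assume "\<not> m \<ge> 1" hence "degree g1 = 0" by (simp add: m_def)
    then obtain a where "g1 = [:a:]" by (rule degree_eq_zeroE)
    thus False using g1l g1c by simp
  qed
  define h where "h = Polynomial.monom 1 p - [:c^p:]"
  have hW: "Wp W h" unfolding Wp_def h_def
  proof
    fix i show "Polynomial.coeff (Polynomial.monom 1 p - [:c ^ p:]) i \<in> W"
      by (cases i) (auto intro!: sb z o cW(2) ng)
  qed
  obtain q r where qr: "h = q * g1 + r" "Wp W r" "degree r < m"
    using reduce[OF g1W g1l m_def[symmetric] m1 hW] by blast
  have "poly h c = 0" by (simp add: h_def poly_monom)
  hence rc: "poly r c = 0" using qr(1) g1c by simp
  have r0: "r = 0"
  proof (rule ccontr)
    assume "r \<noteq> 0"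
    hence "r \<in> S" using qr rc mp by (simp add: S_def)
    thus False using g(2) qr(3) g1d m_def by fastforce
  qed
  have pc: "prime CHAR('a poly)" using pr by simp
  have "[:-c,1:]^p = ([:0,1:] + [:-c:])^p" by simp
  also have "\<dots> = [:0,1:]^p + [:-c:]^p" by (rule freshmans_dream[OF pc]) (use pr in simp)
  also have "\<dots> = h" unfolding h_def poly_const_pow monom_altdef
    using minus_power_prime_CHAR[of p c] pr by simp
  finally have "g1 dvd [:-c,1:]^p" using qr(1) r0 by simp
  hence g1e: "g1 = [:-c,1:]^m" using monic_dvd_linpow[OF g1l] m_def by blast
  obtain m' where m': "m = Suc m'" using m1 by (cases m) auto
  have "Polynomial.coeff g1 m' = of_nat m * (- c)" using linpow_coeff[of "-c" m'] g1e m' by simp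
  hence cm: "of_nat m * (- c) \<in> W" using g1W by (metis Wp_def)
  have "of_nat m \<noteq> (0::'a)" using m1 mp pr(2) of_nat_eq_0_iff_char_dvd[of m]
    by (auto dest: dvd_imp_le)
  hence "c = - (inverse (of_nat m) * (of_nat m * (- c)))" by simp
  hence "c \<in> W" using cm by (metis iv mu ng ofnat)
  thus False using cW(1) by simp
qed

end

lemma qf_val_cong: "(\<And>i. i < length B \<Longrightarrow> v i = u i) \<Longrightarrow> qf_val p B v = qf_val p B u"
  unfolding qf_val_def by (intro sum.cong) auto

lemma qf_val_Nil: "qf_val p [] v = 0"
  by (simp add: qf_val_def)

lemma qf_val_Cons: "qf_val p (x # A) v = x * v 0 ^ p + qf_val p A (\<lambda>i. v (Suc i))"
  unfolding qf_val_def by (simp add: sum.lessThan_Suc_shift del: sum.lessThan_Suc)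

lemma qf_val_append: "qf_val p (A @ C) v = qf_val p A v + qf_val p C (\<lambda>i. v (length A + i))"
  by (induction A arbitrary: v) (simp_all add: qf_val_Nil qf_val_Cons)

lemma qf_val_map_mult: "qf_val p (map (\<lambda>y. x * y) B) v = x * qf_val p B v"
  by (induction B arbitrary: v) (simp_all add: qf_val_Nil qf_val_Cons algebra_simps)

lemma qf_tensor_Cons: "qf_tensor (x # xs) B = map (\<lambda>y. x * y) B @ qf_tensor xs B"
  by (simp add: qf_tensor_def)

lemma length_tensor: "length (qf_tensor xs B) = length xs * length B"
  by (induction xs) (auto simp: qf_tensor_def)

lemma qf_val_tensor:
  "qf_val p (qf_tensor xs B) v = (\<Sum>j<length xs. xs!j * qf_val p B (\<lambda>i. v (j * length B + i)))"
proof (induction xs arbitrary: v)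
  case Nil thus ?case by (simp add: qf_tensor_def qf_val_def)
next
  case (Cons x xs)
  show ?case
    unfolding qf_tensor_Cons qf_val_append qf_val_map_mult Cons.IH
    by (simp add: sum.lessThan_Suc_shift algebra_simps del: sum.lessThan_Suc)
qed

lemma length_qpfister: "length (qpfister p cs) = p ^ length cs"
  by (induction cs) (auto simp: length_tensor)


context
  fixes p :: nat
  assumes pr: "prime p" and ch: "CHAR('a::field) = p"
begin

lemma pp: "p > 0" using pr prime_gt_0_nat by blast

lemma D_zero: "(0::'a) \<in> qf_D UNIV p B"
proof -
  have "qf_val p B (\<lambda>i. 0::'a) = 0" using pp by (simp add: qf_val_def power_0_left)
  thus ?thesis unfolding qf_D_def by (intro CollectI exI[of _ "\<lambda>i. 0"]) auto
qed

lemma D_add: "x \<in> qf_D UNIV p B \<Longrightarrow> y \<in> qf_D UNIV p B \<Longrightarrow> (x::'a) + y \<in> qf_D UNIV p B"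
proof -
  assume "x \<in> qf_D UNIV p B" "y \<in> qf_D UNIV p B"
  then obtain v u where "x = qf_val p B v" "y = qf_val p B u" by (auto simp: qf_D_def)
  moreover have "qf_val p B (\<lambda>i. v i + u i) = qf_val p B v + qf_val p B u"
  proof -
    have fd: "(a + b) ^ p = a ^ p + b ^ p" for a b :: 'a
      by (rule freshmans_dream) (use pr ch in auto)
    show ?thesis unfolding qf_val_def by (simp add: fd distrib_left sum.distrib)
  qed
  ultimately show ?thesis unfolding qf_D_def by (intro CollectI exI[of _ "\<lambda>i. v i + u i"]) auto
qed

lemma D_scale: "x \<in> qf_D UNIV p B \<Longrightarrow> y ^ p * (x::'a) \<in> qf_D UNIV p B"
proof -
  assume "x \<in> qf_D UNIV p B"
  then obtain v where "x = qf_val p B v" by (auto simp: qf_D_def)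
  moreover have "qf_val p B (\<lambda>i. y * v i) = y ^ p * qf_val p B v"
    unfolding qf_val_def by (simp add: sum_distrib_left power_mult_distrib algebra_simps)
  ultimately show ?thesis unfolding qf_D_def by (intro CollectI exI[of _ "\<lambda>i. y * v i"]) auto
qed

lemma D_neg: "x \<in> qf_D UNIV p B \<Longrightarrow> - (x::'a) \<in> qf_D UNIV p B"
  using D_scale[of x B "-1"] minus_power_prime_CHAR[of p "1::'a"] pr ch by simp

lemma D_sum: "finite A \<Longrightarrow> (\<forall>i\<in>A. f i \<in> qf_D UNIV p B) \<Longrightarrow> sum f A \<in> qf_D UNIV p (B::'a list)"
  by (induction A rule: finite_induct) (auto intro: D_zero D_add)

lemma D_pow:
  assumes "1 \<in> qf_D UNIV p B" "\<forall>x\<in>qf_D UNIV p B. \<forall>y\<in>qf_D UNIV p B. x * y \<in> qf_D UNIV p B"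
    "x \<in> qf_D UNIV p B"
  shows "(x::'a) ^ n \<in> qf_D UNIV p B"
  using assms by (induction n) auto

lemma D_subf:
  assumes "1 \<in> qf_D UNIV p B" "\<forall>x\<in>qf_D UNIV p B. \<forall>y\<in>qf_D UNIV p B. x * y \<in> qf_D UNIV p B"
  shows "subf (qf_D UNIV p (B::'a list))"
proof
  fix x assume x: "x \<in> qf_D UNIV p B"
  show "inverse x \<in> qf_D UNIV p B"
  proof (cases "x = 0")
    case True thus ?thesis using D_zero by simp
  next
    case False
    have "inverse x = (inverse x) ^ p * x ^ (p - 1)"
      using False pp by (simp add: power_inverse field_simps power_Suc[symmetric])
    thus ?thesis using D_scale[OF D_pow[OF assms x, of "p-1"], of "inverse x"] by simp
  qed
next
  show "0 \<in> qf_D UNIV p B" by (rule D_zero)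
  show "1 \<in> qf_D UNIV p B" by (rule assms(1))
  fix x y assume "x \<in> qf_D UNIV p B" "y \<in> qf_D UNIV p B"
  thus "x + y \<in> qf_D UNIV p B" "x * y \<in> qf_D UNIV p B" using D_add assms(2) by auto
next
  fix x assume "x \<in> qf_D UNIV p B" thus "- x \<in> qf_D UNIV p B" by (rule D_neg)
qed

lemma D_tensor:
  "qf_D UNIV p (qf_tensor xs B) = {(\<Sum>j<length xs. xs!j * w j) | w. \<forall>j<length xs. w j \<in> qf_D UNIV p (B::'a list)}"
proof (rule Set.set_eqI, rule iffI)
  fix x assume "x \<in> qf_D UNIV p (qf_tensor xs B)"
  then obtain v where "x = qf_val p (qf_tensor xs B) v" by (auto simp: qf_D_def)
  thus "x \<in> {(\<Sum>j<length xs. xs!j * w j) | w. \<forall>j<length xs. w j \<in> qf_D UNIV p B}"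
    unfolding qf_val_tensor qf_D_def
    by (intro CollectI exI[of _ "\<lambda>j. qf_val p B (\<lambda>i. v (j * length B + i))"]) auto
next
  fix x assume "x \<in> {(\<Sum>j<length xs. xs!j * w j) | w. \<forall>j<length xs. w j \<in> qf_D UNIV p B}"
  then obtain w where w: "x = (\<Sum>j<length xs. xs!j * w j)" "\<forall>j<length xs. w j \<in> qf_D UNIV p B"
    by blast
  have "\<forall>j<length xs. \<exists>u. w j = qf_val p B u" using w(2) by (auto simp: qf_D_def)
  then obtain u where u: "\<forall>j<length xs. w j = qf_val p B (u j)" by metis
  define m where "m = length B"
  define v where "v k = u (k div m) (k mod m)" for k
  have "qf_val p B (\<lambda>i. v (j * m + i)) = w j" if "j < length xs" for j
  proof (cases "m = 0")
    case True thus ?thesis using u that by (simp add: qf_val_def m_def)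
  next
    case False
    have "qf_val p B (\<lambda>i. v (j * m + i)) = qf_val p B (u j)"
      proof (rule qf_val_cong)
      fix i assume "i < length B"
      hence "i < m" by (simp add: m_def)
      hence "(j * m + i) div m = j" "(j * m + i) mod m = i" using False by auto
      thus "v (j * m + i) = u j i" by (simp add: v_def)
    qed
    thus ?thesis using u that by simp
  qed
  hence "qf_val p (qf_tensor xs B) v = x" unfolding qf_val_tensor w(1) m_def[symmetric]
    by (intro sum.cong) auto
  thus "x \<in> qf_D UNIV p (qf_tensor xs B)" unfolding qf_D_def by blast
qed

end

context
  fixes p :: nat
  assumes pr: "prime p" and ch: "CHAR('a::field) = p" and p2: "p > 2"
begin

lemma Tset:
  "qf_D UNIV p (qf_tensor (map (\<lambda>j. c^j) [0..<p]) B) =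
     {(\<Sum>j<p. c^j * w j) | w. \<forall>j<p. w j \<in> qf_D UNIV p (B::'a list)}"
  unfolding D_tensor[OF pr ch] by simp

lemma step_aniso:
  assumes an: "qf_anisotropic UNIV p (B::'a list)" and one: "1 \<in> qf_D UNIV p B"
    and mc: "\<forall>x\<in>qf_D UNIV p B. \<forall>y\<in>qf_D UNIV p B. x * y \<in> qf_D UNIV p B"
    and c: "c \<notin> qf_D UNIV p B"
  shows "qf_anisotropic UNIV p (qf_tensor (map (\<lambda>j. c^j) [0..<p]) B)"
  unfolding qf_anisotropic_def
proof (rule allI, rule impI, rule impI)
  fix v assume "\<forall>i<length (qf_tensor (map (\<lambda>j. c^j) [0..<p]) B). v i \<in> UNIV"
    and v0: "qf_val p (qf_tensor (map (\<lambda>j. c^j) [0..<p]) B) v = 0"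
  define m where "m = length B"
  define w where "w j = qf_val p B (\<lambda>i. v (j * m + i))" for j
  interpret subf "qf_D UNIV p B" by (rule D_subf[OF pr ch one mc])
  have wW: "\<forall>j<p. w j \<in> qf_D UNIV p B" unfolding w_def qf_D_def by blast
  have "(\<Sum>j<p. w j * c^j) = 0" using v0 unfolding qf_val_tensor w_def m_def
    by (simp add: mult.commute)
  moreover have "c ^ p \<in> qf_D UNIV p B" using D_scale[OF pr ch one, of c] by simp
  ultimately have w0: "\<forall>j<p. w j = 0" using powers_indep[OF pr ch c _ wW] by blast
  show "\<forall>i<length (qf_tensor (map (\<lambda>j. c^j) [0..<p]) B). v i = 0"
  proof (intro allI impI)
    fix k assume "k < length (qf_tensor (map (\<lambda>j. c^j) [0..<p]) B)"
    hence k: "k < p * m" by (simp add: length_tensor m_def)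
    hence mpos: "m > 0" by (cases m) auto
    define j where "j = k div m"
    define i where "i = k mod m"
    have ji: "k = j * m + i" "j < p" "i < m" using k mpos unfolding j_def i_def
      by (auto simp: less_mult_imp_div_less mult.commute)
    have "qf_val p B (\<lambda>i. v (j * m + i)) = 0" using w0 ji(2) by (simp add: w_def)
    hence "\<forall>i<length B. v (j * m + i) = 0" using an unfolding qf_anisotropic_def by blast
    thus "v k = 0" using ji m_def by simp
  qed
qed

lemma sum_in:
  assumes "\<And>x y. x \<in> T \<Longrightarrow> y \<in> T \<Longrightarrow> x + y \<in> T" "0 \<in> T"
  shows "finite A \<Longrightarrow> (\<forall>i\<in>A. f i \<in> T) \<Longrightarrow> sum f A \<in> (T::'a set)"
  by (induction A rule: finite_induct) (auto intro: assms)

lemma step_mult: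
  assumes one: "1 \<in> qf_D UNIV p (B::'a list)"
    and mc: "\<forall>x\<in>qf_D UNIV p B. \<forall>y\<in>qf_D UNIV p B. x * y \<in> qf_D UNIV p B"
  shows "1 \<in> qf_D UNIV p (qf_tensor (map (\<lambda>j. c^j) [0..<p]) B)"
    and "\<forall>x\<in>qf_D UNIV p (qf_tensor (map (\<lambda>j. c^j) [0..<p]) B).
           \<forall>y\<in>qf_D UNIV p (qf_tensor (map (\<lambda>j. c^j) [0..<p]) B).
             x * y \<in> qf_D UNIV p (qf_tensor (map (\<lambda>j. c^j) [0..<p]) B)"
proof -
  define T where "T = qf_D UNIV p (qf_tensor (map (\<lambda>j. c^j) [0..<p]) B)"
  define W where "W = qf_D UNIV p B"
  have T: "T = {(\<Sum>j<p. c^j * w j) | w. \<forall>j<p. w j \<in> W}" unfolding T_def W_def by (rule Tset)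
  have pp: "p > 0" using p2 by simp
  have z: "0 \<in> W" unfolding W_def by (rule D_zero[OF pr ch])
  have emb: "y \<in> T" if "y \<in> W" for y
  proof -
    have "(\<Sum>j<p. c^j * (if j = 0 then y else 0)) = y" using pp by (simp add: if_distrib cong: if_cong)
    thus ?thesis unfolding T using that z by (intro CollectI exI[of _ "\<lambda>j. if j = 0 then y else 0"]) auto
  qed
  show "1 \<in> T" using emb one W_def by simp
  have Tadd: "x + y \<in> T" if "x \<in> T" "y \<in> T" for x y unfolding T_def by (rule D_add[OF pr ch that[unfolded T_def]])
  have Tz: "0 \<in> T" unfolding T_def by (rule D_zero[OF pr ch])
  have WT: "y * x \<in> T" if "y \<in> W" "x \<in> T" for x y
  proof -
    from that(2) obtain w where w: "x = (\<Sum>j<p. c^j * w j)" "\<forall>j<p. w j \<in> W" unfolding T by blast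
    have "y * x = (\<Sum>j<p. c^j * (y * w j))" unfolding w by (simp add: sum_distrib_left algebra_simps)
    moreover have "\<forall>j<p. y * w j \<in> W" using w(2) that(1) mc W_def by auto
    ultimately show ?thesis unfolding T by (intro CollectI exI[of _ "\<lambda>j. y * w j"]) auto
  qed
  have cT: "c * x \<in> T" if "x \<in> T" for x
  proof -
    from that obtain w where w: "x = (\<Sum>j<p. c^j * w j)" "\<forall>j<p. w j \<in> W" unfolding T by blast
    obtain q where q: "p = Suc q" using pp by (cases p) auto
    define w' where "w' j = (if j = 0 then c^p * w q else w (j - 1))" for j
    have "c * x = (\<Sum>j<q. c^(Suc j) * w j) + c^p * w q"
      unfolding w q by (simp add: sum_distrib_left algebra_simps)
    also have "\<dots> = (\<Sum>j<p. c^j * w' j)"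
      unfolding q by (simp add: sum.lessThan_Suc_shift w'_def del: sum.lessThan_Suc) (simp add: q)
    finally have "c * x = (\<Sum>j<p. c^j * w' j)" .
    moreover have "c ^ p * w q \<in> W" using D_scale[OF pr ch, of "w q" B c] w(2) q W_def by simp
    hence "\<forall>j<p. w' j \<in> W" using w(2) q by (auto simp: w'_def)
    ultimately show ?thesis unfolding T by (intro CollectI exI[of _ w']) auto
  qed
  have cpT: "c ^ k * x \<in> T" if "x \<in> T" for x k
    using that by (induction k) (auto simp: mult.assoc intro: cT)
  show "\<forall>x\<in>T. \<forall>y\<in>T. x * y \<in> T"
  proof (intro ballI)
    fix x y assume "x \<in> T" "y \<in> T"
    from \<open>x \<in> T\<close> obtain w where w: "x = (\<Sum>j<p. c^j * w j)" "\<forall>j<p. w j \<in> W" unfolding T by blast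
    have "x * y = (\<Sum>j<p. c^j * (w j * y))" unfolding w sum_distrib_right by (simp add: mult_ac)
    moreover have "\<forall>j\<in>{..<p}. c^j * (w j * y) \<in> T" using WT w(2) \<open>y \<in> T\<close> cpT by auto
    ultimately show "x * y \<in> T" using sum_in[of T, OF Tadd Tz, of "{..<p}" "\<lambda>j. c^j * (w j * y)"] by simp
  qed
qed

end

lemma qf_val_one: "qf_val p [1] v = v 0 ^ p"
  by (simp add: qf_val_def)

lemma pfister_exists:
  assumes pr: "prime p" and ch: "CHAR('a::field) = p" and p2: "p > 2"
    and one: "1 \<in> qf_D UNIV p (phi::'a list)"
    and mc: "\<forall>x\<in>qf_D UNIV p phi. \<forall>y\<in>qf_D UNIV p phi. x * y \<in> qf_D UNIV p phi"
  shows "\<exists>cs. qf_anisotropic UNIV p (qpfister p cs) \<and> qf_D UNIV p (qpfister p cs) = qf_D UNIV p phi"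
proof -
  define V where "V = qf_D UNIV p phi"
  have "V \<noteq> {0}" using one V_def by auto
  then obtain Bs where Bs: "qf_anisotropic UNIV p Bs" "qf_D UNIV p Bs = V"
    using exists_aniso[OF pr ch, of phi] V_def by auto
  define Inv where "Inv cs \<longleftrightarrow> qf_anisotropic UNIV p (qpfister p cs) \<and> 1 \<in> qf_D UNIV p (qpfister p cs)
     \<and> (\<forall>x\<in>qf_D UNIV p (qpfister p cs). \<forall>y\<in>qf_D UNIV p (qpfister p cs). x * y \<in> qf_D UNIV p (qpfister p cs))
     \<and> qf_D UNIV p (qpfister p cs) \<subseteq> V" for cs :: "'a list"
  have pp: "p > 0" using p2 by simp
  have main: "\<forall>cs. Inv cs \<and> length Bs - length (qpfister p cs) = n \<longrightarrow>
      (\<exists>cs'. qf_anisotropic UNIV p (qpfister p cs') \<and> qf_D UNIV p (qpfister p cs') = V)" for n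
  proof (induction n rule: less_induct)
    case (less n)
    show ?case
    proof (intro allI impI)
      fix cs assume a: "Inv cs \<and> length Bs - length (qpfister p cs) = n"
      show "\<exists>cs'. qf_anisotropic UNIV p (qpfister p cs') \<and> qf_D UNIV p (qpfister p cs') = V"
      proof (cases "qf_D UNIV p (qpfister p cs) = V")
        case True thus ?thesis using a Inv_def by blast
      next
        case False
        then obtain c where c: "c \<in> V" "c \<notin> qf_D UNIV p (qpfister p cs)" using a Inv_def by blast
        have Q: "qpfister p (c # cs) = qf_tensor (map (\<lambda>j. c^j) [0..<p]) (qpfister p cs)" by simp
        have I1: "qf_anisotropic UNIV p (qpfister p (c # cs))"
          unfolding Q by (rule step_aniso[OF pr ch p2]) (use a c in \<open>auto simp: Inv_def\<close>)
        have I2: "1 \<in> qf_D UNIV p (qpfister p (c # cs))"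
          unfolding Q by (rule step_mult(1)[OF pr ch p2]) (use a in \<open>auto simp: Inv_def\<close>)
        have I3: "\<forall>x\<in>qf_D UNIV p (qpfister p (c # cs)). \<forall>y\<in>qf_D UNIV p (qpfister p (c # cs)).
              x * y \<in> qf_D UNIV p (qpfister p (c # cs))"
          unfolding Q by (rule step_mult(2)[OF pr ch p2]) (use a in \<open>auto simp: Inv_def\<close>)
        have I4: "qf_D UNIV p (qpfister p (c # cs)) \<subseteq> V"
        proof
          fix x assume "x \<in> qf_D UNIV p (qpfister p (c # cs))"
          then obtain w where w: "x = (\<Sum>j<p. c^j * w j)" "\<forall>j<p. w j \<in> qf_D UNIV p (qpfister p cs)"
            unfolding Q Tset[OF pr ch p2] by blast
          have cj: "c ^ j \<in> V" for j using D_pow[OF pr ch one mc] c(1) unfolding V_def by blast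
          have wj: "w j \<in> V" if "j < p" for j using w(2) a that unfolding Inv_def by blast
          have "\<forall>j\<in>{..<p}. c^j * w j \<in> V"
            using cj wj mc unfolding V_def by blast
          thus "x \<in> V" unfolding w V_def using D_sum[OF pr ch, of "{..<p}" "\<lambda>j. c^j * w j" phi] by simp
        qed
        have "length (qpfister p (c # cs)) \<le> length Bs"
          using aniso_length_le[OF pr ch I1 Bs(1)] I4 Bs(2) by simp
        moreover have "length (qpfister p (c # cs)) = p * length (qpfister p cs)"
          by (simp only: length_qpfister) simp
        moreover have "length (qpfister p cs) \<ge> 1" using pp by (simp add: length_qpfister)
        moreover have "1 * length (qpfister p cs) < p * length (qpfister p cs)"
          by (rule mult_strict_right_mono) (use p2 \<open>length (qpfister p cs) \<ge> 1\<close> in auto)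
        ultimately have "length Bs - length (qpfister p (c # cs)) < n" using a by linarith
        thus ?thesis using less.IH I1 I2 I3 I4 Inv_def by blast
      qed
    qed
  qed
  have "Inv []"
    unfolding Inv_def qpfister.simps
  proof (intro conjI)
    show "qf_anisotropic UNIV p ([1]::'a list)" using pp by (simp add: qf_anisotropic_def qf_val_one)
    show "1 \<in> qf_D UNIV p ([1]::'a list)" unfolding qf_D_def qf_val_one
      by (intro CollectI exI[of _ "\<lambda>_. 1"]) simp
    show "\<forall>x\<in>qf_D UNIV p ([1]::'a list). \<forall>y\<in>qf_D UNIV p ([1]::'a list). x * y \<in> qf_D UNIV p ([1]::'a list)"
    proof (intro ballI)
      fix x y assume "x \<in> qf_D UNIV p ([1]::'a list)" "y \<in> qf_D UNIV p ([1]::'a list)"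
      then obtain a b where "x = a ^ p" "y = b ^ p" by (auto simp: qf_D_def qf_val_one)
      thus "x * y \<in> qf_D UNIV p ([1]::'a list)" unfolding qf_D_def qf_val_one
        by (intro CollectI exI[of _ "\<lambda>_. a * b"]) (simp add: power_mult_distrib)
    qed
    show "qf_D UNIV p ([1]::'a list) \<subseteq> V"
    proof
      fix x assume "x \<in> qf_D UNIV p ([1]::'a list)"
      then obtain a where "x = a ^ p" by (auto simp: qf_D_def qf_val_one)
      thus "x \<in> V" using D_scale[OF pr ch one, of a] V_def by simp
    qed
  qed
  thus ?thesis using main V_def by blast
qed

definition dlt :: "'a::field \<Rightarrow> 'a poly \<Rightarrow> 'a poly" where
  "dlt h Q = pcompose Q [:h, 1:] - Q"

lemma poly_dlt: "poly (dlt h Q) b = poly Q (b + h) - poly Q b"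
  by (simp add: dlt_def poly_pcompose add.commute)

lemma dlt_pCons: "dlt h (pCons a R) = [:h,1:] * dlt h R + Polynomial.smult h R"
proof -
  have e: "[:h,1:] * R = Polynomial.smult h R + pCons 0 R" by (simp add: mult_pCons_left)
  have "pCons a R = [:a:] + pCons 0 R" by simp
  thus ?thesis unfolding dlt_def pcompose_pCons by (simp add: algebra_simps e)
qed

lemma dlt_const: "dlt h [:r:] = 0"
  by (simp add: dlt_def)

lemma dlt_deg:
  "degree Q \<le> Suc n \<Longrightarrow> degree (dlt h Q) \<le> n \<and>
     Polynomial.coeff (dlt h Q) n = of_nat (Suc n) * h * Polynomial.coeff Q (Suc n)"
proof (induction n arbitrary: Q)
  case 0
  obtain a R where Q: "Q = pCons a R" by (cases Q) auto
  have "degree R = 0" using 0 Q by (cases "R = 0") auto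
  then obtain r where R: "R = [:r:]" by (rule degree_eq_zeroE)
  have "dlt h Q = Polynomial.smult h [:r:]"
    by (simp only: Q R dlt_pCons[of h a "[:r:]"] dlt_const) simp
  thus ?case using Q R by simp
next
  case (Suc n)
  obtain a R where Q: "Q = pCons a R" by (cases Q) auto
  have dR: "degree R \<le> Suc n" using Suc.prems Q by (cases "R = 0") auto
  note IH = Suc.IH[OF dR]
  have "degree ([:h,1:] * dlt h R) \<le> Suc n"
    using degree_mult_le[of "[:h,1:]" "dlt h R"] IH by (simp add: add.commute)
  moreover have "degree (Polynomial.smult h R) \<le> Suc n" using dR degree_smult_le order.trans by blast
  ultimately have d: "degree (dlt h Q) \<le> Suc n" unfolding Q dlt_pCons
    using degree_add_le by blast
  have c0: "Polynomial.coeff (dlt h R) (Suc n) = 0" using IH by (simp add: coeff_eq_0)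
  have "Polynomial.coeff (dlt h Q) (Suc n) =
      h * Polynomial.coeff (dlt h R) (Suc n) + Polynomial.coeff (dlt h R) n + h * Polynomial.coeff R (Suc n)"
    unfolding Q dlt_pCons by (simp add: mult_pCons_left)
  also have "\<dots> = of_nat (Suc (Suc n)) * h * Polynomial.coeff Q (Suc (Suc n))"
    using IH c0 Q by (simp add: algebra_simps)
  finally show ?case using d by simp
qed

lemma of_nat_frob:
  assumes "prime p" "CHAR('a::field) = p"
  shows "(of_nat n :: 'a) ^ p = of_nat n"
proof (induction n)
  case 0 thus ?case using assms prime_gt_0_nat by (simp add: power_0_left)
next
  case (Suc n)
  have "(of_nat n + 1 :: 'a) ^ p = of_nat n ^ p + 1 ^ p"
    by (rule freshmans_dream) (use assms in auto)
  moreover have "of_nat (Suc n) = (of_nat n + 1::'a)" by simp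
  ultimately show ?case using Suc by (simp only:) simp
qed

lemma mult_closed:
  fixes F :: "'a::field set" and phi :: "'a list" and P :: "'a poly" and \<alpha> :: 'a
  assumes pr: "prime p" and p2: "p > 2" and ch: "CHAR('a) = p"
    and sf: "is_subfield F" and one: "1 \<in> qf_D F p phi"
    and cP: "\<forall>i. Polynomial.coeff P i \<in> {x ^ p | x. x \<in> F}"
    and d2: "2 \<le> degree P" and dp: "degree P < p"
    and aV: "\<alpha> \<in> qf_D UNIV p phi" and a0: "\<alpha> \<noteq> 0"
    and hyp: "\<forall>b \<in> qf_D F p phi. \<alpha> * poly P b \<in> qf_D UNIV p phi"
  shows "\<forall>x\<in>qf_D UNIV p phi. \<forall>y\<in>qf_D UNIV p phi. x * y \<in> qf_D UNIV p phi"
proof -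
  define V where "V = qf_D UNIV p phi"
  define DF where "DF = qf_D F p phi"
  have pp: "p > 0" using p2 by simp
  have F01: "0 \<in> F" "1 \<in> F" and Fadd: "\<And>x y. x \<in> F \<Longrightarrow> y \<in> F \<Longrightarrow> x + y \<in> F"
    using sf by (auto simp: is_subfield_def)
  have DFV: "x \<in> V" if "x \<in> DF" for x using that by (auto simp: DF_def V_def qf_D_def)
  have DF0: "0 \<in> DF" unfolding DF_def qf_D_def
    by (intro CollectI exI[of _ "\<lambda>_. 0"]) (use pp F01 in \<open>auto simp: qf_val_def power_0_left\<close>)
  have DFadd: "x + y \<in> DF" if "x \<in> DF" "y \<in> DF" for x y
  proof -
    from that obtain v u where v: "x = qf_val p phi v" "\<forall>i<length phi. v i \<in> F"
      and u: "y = qf_val p phi u" "\<forall>i<length phi. u i \<in> F" by (auto simp: DF_def qf_D_def)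
    have fd: "(a + b) ^ p = a ^ p + b ^ p" for a b :: 'a
      by (rule freshmans_dream) (use pr ch in auto)
    have "qf_val p phi (\<lambda>i. v i + u i) = x + y"
      unfolding v u qf_val_def by (simp add: fd distrib_left sum.distrib)
    thus ?thesis unfolding DF_def qf_D_def using v(2) u(2) Fadd
      by (intro CollectI exI[of _ "\<lambda>i. v i + u i"]) auto
  qed
  have Vsub: "x - y \<in> V" if "x \<in> V" "y \<in> V" for x y
    using D_add[OF pr ch that(1)[unfolded V_def] D_neg[OF pr ch that(2)[unfolded V_def]]] by (simp add: V_def)
  define Prop where "Prop Q \<longleftrightarrow> (\<forall>b\<in>DF. \<alpha> * poly Q b \<in> V)" for Q
  have propD: "Prop (dlt h Q)" if "Prop Q" "h \<in> DF" for h Q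
    unfolding Prop_def
  proof
    fix b assume "b \<in> DF"
    hence "\<alpha> * poly Q (b + h) \<in> V" "\<alpha> * poly Q b \<in> V" using that DFadd Prop_def by auto
    thus "\<alpha> * poly (dlt h Q) b \<in> V" unfolding poly_dlt using Vsub by (simp add: right_diff_distrib)
  qed
  define d where "d = degree P"
  have DF1: "1 \<in> DF" using one DF_def by simp
  have iter: "k \<le> d \<Longrightarrow> Prop ((dlt 1 ^^ k) P) \<and> degree ((dlt 1 ^^ k) P) \<le> d - k \<and>
      (\<exists>N. Polynomial.coeff ((dlt 1 ^^ k) P) (d - k) = of_nat N * lead_coeff P \<and> \<not> p dvd N)" for k
  proof (induction k)
    case 0
    have "Prop P" using hyp by (simp add: Prop_def DF_def V_def)
    thus ?case using pr by (auto simp: d_def intro!: exI[of _ 1])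
  next
    case (Suc k)
    define Q where "Q = (dlt 1 ^^ k) P"
    from Suc have IH: "Prop Q" "degree Q \<le> Suc (d - Suc k)"
      and N: "\<exists>N. Polynomial.coeff Q (Suc (d - Suc k)) = of_nat N * lead_coeff P \<and> \<not> p dvd N"
      unfolding Q_def by (auto simp: Suc_diff_Suc)
    then obtain N where N: "Polynomial.coeff Q (Suc (d - Suc k)) = of_nat N * lead_coeff P" "\<not> p dvd N"
      by blast
    note dd = dlt_deg[OF IH(2), of 1]
    have nd: "\<not> p dvd (Suc (d - Suc k))" using Suc.prems dp d_def
      by (auto dest: dvd_imp_le)
    have nd2: "\<not> p dvd (Suc (d - Suc k) * N)" using nd N(2) pr prime_dvd_mult_nat by blast
    have cc: "Polynomial.coeff (dlt 1 Q) (d - Suc k) = of_nat (Suc (d - Suc k) * N) * lead_coeff P"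
    proof -
      have "Polynomial.coeff (dlt 1 Q) (d - Suc k) = of_nat (Suc (d - Suc k)) * (of_nat N * lead_coeff P)"
        using dd N(1) by (simp only: mult_1_right)
      thus ?thesis by (simp only: of_nat_mult mult.assoc)
    qed
    have R: "(dlt 1 ^^ Suc k) P = dlt 1 Q" by (simp add: Q_def)
    show ?case unfolding R
      by (intro conjI exI[of _ "Suc (d - Suc k) * N"]) (use dd propD[OF IH(1) DF1] nd2 cc in blast)+
  qed
  define Q2 where "Q2 = (dlt 1 ^^ (d - 2)) P"
  have it2: "Prop Q2" "degree Q2 \<le> Suc (Suc 0)"
    "\<exists>N. Polynomial.coeff Q2 (Suc (Suc 0)) = of_nat N * lead_coeff P \<and> \<not> p dvd N"
    using iter[of "d - 2"] d2 unfolding Q2_def d_def by (auto simp: numeral_2_eq_2)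
  then obtain N where N: "Polynomial.coeff Q2 2 = of_nat N * lead_coeff P" "\<not> p dvd N"
    by (auto simp: numeral_2_eq_2)
  obtain s where s: "lead_coeff P = s ^ p" "s \<in> F" using cP by blast
  have P0: "P \<noteq> 0" using d2 by auto
  define t where "t = of_nat (2 * N) * s"
  have tp: "t ^ p = of_nat (2 * N) * lead_coeff P"
    unfolding t_def s(1) power_mult_distrib of_nat_frob[OF pr ch] ..
  have "\<not> p dvd (2 * N)" using N(2) pr p2 prime_dvd_mult_nat by (auto dest: dvd_imp_le)
  hence "of_nat (2 * N) \<noteq> (0::'a)" using ch of_nat_eq_0_iff_char_dvd by blast
  hence tp0: "t ^ p \<noteq> 0" using tp P0 by simp
  have axy: "\<alpha> * x * y \<in> V" if "x \<in> DF" "y \<in> DF" for x y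
  proof -
    define Q1 where "Q1 = dlt x Q2"
    define Q0 where "Q0 = dlt y Q1"
    have d1: "degree Q1 \<le> Suc 0" "Polynomial.coeff Q1 (Suc 0) = of_nat 2 * x * Polynomial.coeff Q2 2"
      using dlt_deg[OF it2(2), of x] unfolding Q1_def by (simp_all add: numeral_2_eq_2)
    have c0: "Polynomial.coeff Q0 0 = y * Polynomial.coeff Q1 (Suc 0)"
      using dlt_deg[OF d1(1), of y] unfolding Q0_def by simp
    have "Prop Q0" unfolding Q0_def Q1_def by (intro propD it2(1) that)
    hence "\<alpha> * poly Q0 0 \<in> V" using DF0 Prop_def by blast
    hence "\<alpha> * (y * (of_nat 2 * x * (of_nat N * lead_coeff P))) \<in> V"
      by (simp add: poly_0_coeff_0 c0 d1 N(1))
    hence "inverse t ^ p * (\<alpha> * (y * (of_nat 2 * x * (of_nat N * lead_coeff P)))) \<in> V"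
      using D_scale[OF pr ch] V_def by blast
    moreover have "inverse t ^ p * (\<alpha> * (y * (of_nat 2 * x * (of_nat N * lead_coeff P)))) = \<alpha> * x * y"
      using tp tp0 by (simp add: power_inverse field_simps)
    ultimately show ?thesis by metis
  qed
  have eDF: "phi ! i \<in> DF" if "i < length phi" for i
  proof -
    have "qf_val p phi (\<lambda>j. if j = i then 1 else 0) = (\<Sum>j<length phi. if j = i then phi ! j else 0)"
      unfolding qf_val_def using pp by (intro sum.cong) auto
    hence "qf_val p phi (\<lambda>j. if j = i then 1 else 0) = phi ! i" using that by simp
    thus ?thesis unfolding DF_def qf_D_def using F01
      by (intro CollectI exI[of _ "\<lambda>j. if j = i then 1 else 0"]) auto
  qed
  have aXY: "\<alpha> * X * Y \<in> V" if XV: "X \<in> V" and YV: "Y \<in> V" for X Y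
  proof -
    obtain v where X: "X = qf_val p phi v" using XV by (auto simp: V_def qf_D_def)
    obtain u where Y: "Y = qf_val p phi u" using YV by (auto simp: V_def qf_D_def)
    have "\<alpha> * X * Y = (\<Sum>i<length phi. \<alpha> * (phi!i * v i^p)) * (\<Sum>j<length phi. phi!j * u j^p)"
      unfolding X Y qf_val_def by (simp add: sum_distrib_left)
    also have "\<dots> = (\<Sum>i<length phi. \<Sum>j<length phi. (\<alpha> * (phi!i * v i^p)) * (phi!j * u j^p))"
      by (rule sum_product)
    also have "\<dots> = (\<Sum>i<length phi. \<Sum>j<length phi. (v i * u j) ^ p * (\<alpha> * phi ! i * phi ! j))"
      by (intro sum.cong refl) (simp add: power_mult_distrib mult_ac)
    also have "\<dots> \<in> V" unfolding V_def
      by (intro D_sum[OF pr ch] ballI finite_lessThan D_scale[OF pr ch])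
         (use axy eDF in \<open>auto simp: V_def\<close>)
    finally show ?thesis .
  qed
  have odd: "\<alpha> ^ (2 * k + 1) \<in> V" for k
  proof (induction k)
    case 0 thus ?case using aV V_def by simp
  next
    case (Suc k)
    have "\<alpha> * \<alpha> ^ (2 * k + 1) * \<alpha> \<in> V" using aXY[OF Suc aV[folded V_def]] .
    thus ?case by (simp add: algebra_simps power_Suc)
  qed
  have "odd p" using pr p2 by (rule prime_odd_nat)
  then obtain k0 where "p = 2 * k0 + 1" by (rule oddE)
  hence k: "p = 2 * (k0 - 1) + 1 + 2" using p2 by auto
  define k where "k = k0 - 1"
  have k: "p = 2 * k + 1 + 2" using k k_def by simp
  show ?thesis unfolding V_def[symmetric]
  proof (intro ballI)
    fix X Y assume XY: "X \<in> V" "Y \<in> V"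
    have "\<alpha> * \<alpha> ^ (2 * k + 1) * (\<alpha> * X * Y) \<in> V" using aXY[OF odd aXY[OF XY]] .
    hence "inverse \<alpha> ^ p * (\<alpha> * \<alpha> ^ (2 * k + 1) * (\<alpha> * X * Y)) \<in> V" using D_scale[OF pr ch] V_def by blast
    moreover have "inverse \<alpha> ^ p * (\<alpha> * \<alpha> ^ (2 * k + 1) * (\<alpha> * X * Y)) = X * Y"
      unfolding k using a0 by (simp add: power_inverse field_simps power_Suc power_add)
    ultimately show "X * Y \<in> V" by metis
  qed
qed

hide_const (open) up_ring.coeff

theorem mainTheorem11:
  fixes F :: "'a::field set" and p :: nat and phi :: "'a list"
    and P :: "'a poly" and \<alpha> :: 'a
  assumes "prime p" and "p > 2" and "CHAR('a) = p"
    and "is_subfield F"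
    and "is_qform F phi"
    and "1 \<in> qf_D F p phi"
    and "\<forall>i. coeff P i \<in> {x ^ p | x. x \<in> F}"
    and "2 \<le> degree P" and "degree P < p"
    and "\<alpha> \<in> qf_D UNIV p phi" and "\<alpha> \<noteq> 0"
    and "\<forall>b \<in> qf_D F p phi. \<alpha> * poly P b \<in> qf_D UNIV p phi"
  shows "(\<exists>psi. is_qform UNIV psi \<and> qf_anisotropic UNIV p psi
                \<and> qf_D UNIV p psi = qf_D UNIV p phi)
       \<and> (\<forall>psi. is_qform UNIV psi \<and> qf_anisotropic UNIV p psi
                \<and> qf_D UNIV p psi = qf_D UNIV p phi \<longrightarrow> is_quasi_pfister p psi)"
proof -
  note pr = assms(1) and ch = assms(3)
  have oneV: "1 \<in> qf_D UNIV p phi" using assms(6) by (auto simp: qf_D_def)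
  have mc: "\<forall>x\<in>qf_D UNIV p phi. \<forall>y\<in>qf_D UNIV p phi. x * y \<in> qf_D UNIV p phi"
    by (rule mult_closed[OF assms(1,2,3,4,6,7,8,9,10,11,12)])
  obtain cs where cs: "qf_anisotropic UNIV p (qpfister p cs)" "qf_D UNIV p (qpfister p cs) = qf_D UNIV p phi"
    using pfister_exists[OF pr ch assms(2) oneV mc] by blast
  show ?thesis
  proof (intro conjI allI impI)
    show "\<exists>psi. is_qform UNIV psi \<and> qf_anisotropic UNIV p psi \<and> qf_D UNIV p psi = qf_D UNIV p phi"
      by (rule exists_aniso[OF pr ch]) (use oneV in auto)
    fix psi assume "is_qform UNIV psi \<and> qf_anisotropic UNIV p psi \<and> qf_D UNIV p psi = qf_D UNIV p phi"
    hence "qf_iso p psi (qpfister p cs)" using iso_same[OF pr ch _ cs(1)] cs(2) by auto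
    thus "is_quasi_pfister p psi" unfolding is_quasi_pfister_def by blast
  qed
qed

end
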